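(* $\operatorname{Spec}(32_{65})\subseteq\{11,12,13,\dots\}\cup\{\omega\}$.
   Context: $32_{65}$ is the finite integral symmetric relation algebra with atoms $1'$, $a$, $b$, $c$, all symmetric, in which a diversity cycle $xyz$ (with $x,y,z\in\{a,b,c\}$) is mandatory (i.e. $x;y\ge z$) if it involves $a$ and forbidden (i.e. $x;y\cdot z=0$) otherwise. A representation over a set $U$ is an embedding into the full relation algebra $\langle\mathcal P(U\times U),\cup,{}^c,\circ,{}^{-1},\mathrm{Id}_U\rangle$. $\operatorname{Spec}(A)$ is the set of cardinals $\alpha\le\omega$ such that $A$ has a representation over a set of cardinality $\alpha$. *)

theory Defs
  imports Main
begin

text \<open>Elements of the algebra are
  sets of atoms (the algebra is finite and atomic).\<close>

datatype atom = Ident | At_a | At_b | At_c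

definition diversity :: "atom set" where
  "diversity = {At_a, At_b, At_c}"

text \<open>A diversity cycle xyz is mandatory (x;y \<ge> z) iff it involves a, forbidden otherwise.\<close>
definition cycle_ok :: "atom \<Rightarrow> atom \<Rightarrow> atom \<Rightarrow> bool" where
  "cycle_ok x y z \<longleftrightarrow> At_a \<in> {x, y, z}"

text \<open>Composition of atoms (all atoms are symmetric, so x;x \<ge> 1' for diversity x).\<close>
definition atom_comp :: "atom \<Rightarrow> atom \<Rightarrow> atom set" where
  "atom_comp x y =
     (if x = Ident then {y}
      else if y = Ident then {x}
      else {z. (z = Ident \<and> x = y) \<or> (z \<in> diversity \<and> cycle_ok x y z)})"

definition ra_comp :: "atom set \<Rightarrow> atom set \<Rightarrow> atom set" where
  "ra_comp X Y = (\<Union>x\<in>X. \<Union>y\<in>Y. atom_comp x y)"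

definition ra_conv :: "atom set \<Rightarrow> atom set" where
  "ra_conv X = X"   \<comment> \<open>all atoms symmetric\<close>

definition ra_one :: "atom set" where
  "ra_one = {Ident}"

definition representation :: "'u set \<Rightarrow> (atom set \<Rightarrow> ('u \<times> 'u) set) \<Rightarrow> bool" where
  "representation U h \<longleftrightarrow>
     inj h \<and>
     (\<forall>X Y. h (X \<union> Y) = h X \<union> h Y) \<and>
     (\<forall>X. h (- X) = (U \<times> U) - h X) \<and>
     (\<forall>X Y. h (ra_comp X Y) = h X O h Y) \<and>
     (\<forall>X. h (ra_conv X) = (h X)\<inverse>) \<and>
     h ra_one = Id_on U"

definition representable_over :: "'u set \<Rightarrow> bool" where
  "representable_over U \<longleftrightarrow> (\<exists>h. representation U h)"

end

theory Submission
  imports Defs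
begin

lemma key11:
  fixes U :: "'u set" and A B C :: "('u \<times> 'u) set"
  assumes fin: "finite U"
    and subA: "A \<subseteq> U \<times> U" and subB: "B \<subseteq> U \<times> U" and subC: "C \<subseteq> U \<times> U"
    and irA: "\<And>p. (p,p) \<notin> A" and irB: "\<And>p. (p,p) \<notin> B" and irC: "\<And>p. (p,p) \<notin> C"
    and dAB: "A \<inter> B = {}" and dAC: "A \<inter> C = {}" and dBC: "B \<inter> C = {}"
    and symB: "\<And>p q. (p,q) \<in> B \<Longrightarrow> (q,p) \<in> B"
    and symC: "\<And>p q. (p,q) \<in> C \<Longrightarrow> (q,p) \<in> C"
    and tri: "\<And>p q r. (p,q) \<in> B \<union> C \<Longrightarrow> (q,r) \<in> B \<union> C \<Longrightarrow> (p,r) \<notin> B \<union> C"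
    and c1: "A \<subseteq> B O B" and c2: "A \<subseteq> C O C" and c3: "A \<subseteq> B O C" and c4: "A \<subseteq> C O B"
    and xz: "(x,z) \<in> A" and xz': "(x,z') \<in> A" and zz': "(z,z') \<in> B"
  shows "card U \<ge> 11"
proof -
  obtain w1 where w1: "(x,w1) \<in> B" "(w1,z) \<in> B" using c1 xz by blast
  obtain w2 where w2: "(x,w2) \<in> C" "(w2,z) \<in> C" using c2 xz by blast
  obtain w3 where w3: "(x,w3) \<in> B" "(w3,z) \<in> C" using c3 xz by blast
  obtain w4 where w4: "(x,w4) \<in> C" "(w4,z) \<in> B" using c4 xz by blast
  obtain v1 where v1: "(x,v1) \<in> B" "(v1,z') \<in> B" using c1 xz' by blast
  obtain v2 where v2: "(x,v2) \<in> C" "(v2,z') \<in> C" using c2 xz' by blast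
  obtain v3 where v3: "(x,v3) \<in> B" "(v3,z') \<in> C" using c3 xz' by blast
  obtain v4 where v4: "(x,v4) \<in> C" "(v4,z') \<in> B" using c4 xz' by blast
  have nw: "w \<noteq> v" if "(w,z) \<in> B \<union> C" "(v,z') \<in> B \<union> C" for w v
  proof
    assume "w = v"
    then have "(z,w) \<in> B \<union> C" "(w,z') \<in> B \<union> C" using that symB symC by blast+
    then show False using tri zz' by blast
  qed
  have dis: "(p,q) \<in> B \<Longrightarrow> (p,q) \<notin> C" "(p,q) \<in> A \<Longrightarrow> (p,q) \<notin> C" "(p,q) \<in> A \<Longrightarrow> (p,q) \<notin> B" for p q
    using dAB dAC dBC by blast+
  let ?S = "{x,z,z',w1,w2,w3,w4,v1,v2,v3,v4}"
  have "?S \<subseteq> U" using subA subB subC xz xz' w1 w2 w3 w4 v1 v2 v3 v4 by blast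
  then have "card ?S \<le> card U" using fin by (simp add: card_mono)
  moreover have "card ?S = 11"
  proof -
    have d1: "x \<noteq> z" "x \<noteq> z'" "z \<noteq> z'" using xz xz' zz' irA irB by metis+
    have d2: "x \<noteq> w1" "x \<noteq> w2" "x \<noteq> w3" "x \<noteq> w4" "x \<noteq> v1" "x \<noteq> v2" "x \<noteq> v3" "x \<noteq> v4"
      using w1 w2 w3 w4 v1 v2 v3 v4 irB irC by metis+
    have d3: "z \<noteq> w1" "z \<noteq> w2" "z \<noteq> w3" "z \<noteq> w4" "z \<noteq> v1" "z \<noteq> v2" "z \<noteq> v3" "z \<noteq> v4"
      using w1 w2 w3 w4 v1 v2 v3 v4 xz dis by metis+
    have d4: "z' \<noteq> w1" "z' \<noteq> w2" "z' \<noteq> w3" "z' \<noteq> w4" "z' \<noteq> v1" "z' \<noteq> v2" "z' \<noteq> v3" "z' \<noteq> v4"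
      using w1 w2 w3 w4 v1 v2 v3 v4 xz' dis by metis+
    have d5: "w1 \<noteq> w2" "w1 \<noteq> w3" "w1 \<noteq> w4" "w2 \<noteq> w3" "w2 \<noteq> w4" "w3 \<noteq> w4"
      using w1 w2 w3 w4 dis by metis+
    have d6: "v1 \<noteq> v2" "v1 \<noteq> v3" "v1 \<noteq> v4" "v2 \<noteq> v3" "v2 \<noteq> v4" "v3 \<noteq> v4"
      using v1 v2 v3 v4 dis by metis+
    have d7: "w1 \<noteq> v1" "w1 \<noteq> v2" "w1 \<noteq> v3" "w1 \<noteq> v4"
       "w2 \<noteq> v1" "w2 \<noteq> v2" "w2 \<noteq> v3" "w2 \<noteq> v4"
       "w3 \<noteq> v1" "w3 \<noteq> v2" "w3 \<noteq> v3" "w3 \<noteq> v4"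
       "w4 \<noteq> v1" "w4 \<noteq> v2" "w4 \<noteq> v3" "w4 \<noteq> v4"
      using nw w1 w2 w3 w4 v1 v2 v3 v4 by blast+
    show ?thesis using d1 d2 d3 d4 d5 d6 d7 by simp
  qed
  ultimately show ?thesis by simp
qed

theorem mainTheorem4:
  fixes U :: "'u set"
  assumes "representable_over U" and "finite U"
  shows "card U \<ge> 11"
proof -
  obtain h where R: "representation U h" using assms(1) unfolding representable_over_def by blast
  have inj: "inj h" and hun: "\<And>X Y. h (X \<union> Y) = h X \<union> h Y"
    and hneg: "\<And>X. h (- X) = (U \<times> U) - h X"
    and hcomp: "\<And>X Y. h (ra_comp X Y) = h X O h Y"
    and hconv: "\<And>X. h (ra_conv X) = (h X)\<inverse>" and hone: "h ra_one = Id_on U"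
    using R unfolding representation_def by blast+
  have hsub: "h X \<subseteq> U \<times> U" for X
    using hneg[of "- X"] by simp
  have hmono: "h X \<subseteq> h Y" if "X \<subseteq> Y" for X Y
    using hun[of X Y] that by (metis Un_absorb1 Un_upper1 sup.commute)
  have hdisj: "h X \<inter> h Y = {}" if "X \<inter> Y = {}" for X Y
  proof -
    have "X \<subseteq> - Y" using that by blast
    then have "h X \<subseteq> h (- Y)" by (rule hmono)
    then show ?thesis using hneg[of Y] by blast
  qed
  have hsym: "(h X)\<inverse> = h X" for X using hconv[of X] by (simp add: ra_conv_def)
  have hempty: "h {} = {}"
  proof -
    have "h {} \<inter> h UNIV = {}" by (rule hdisj) simp
    moreover have "h {} \<subseteq> h UNIV" by (rule hmono) simp
    ultimately show ?thesis by blast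
  qed
  have hUNIV: "h UNIV = U \<times> U" using hneg[of "{}"] hempty by simp
  have Une: "U \<noteq> {}"
  proof
    assume "U = {}"
    then have "h UNIV = h {}" using hUNIV hempty by simp
    then show False using inj by (metis injD empty_not_UNIV)
  qed
  then obtain x where xU: "x \<in> U" by blast
  define A where "A = h {At_a}"
  define B where "B = h {At_b}"
  define C where "C = h {At_c}"
  have hI: "h {Ident} = Id_on U" using hone by (simp add: ra_one_def)
  have hIa: "h {Ident, At_a} = Id_on U \<union> A"
    using hun[of "{Ident}" "{At_a}"] hI A_def by (simp add: insert_is_Un[of Ident "{At_a}"])
  have hbc: "h {At_b, At_c} = B \<union> C"
    using hun[of "{At_b}" "{At_c}"] B_def C_def by (simp add: insert_is_Un[of At_b "{At_c}"])
  have cbb: "ra_comp {At_b} {At_b} = {Ident, At_a}"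
    by (auto simp: ra_comp_def atom_comp_def diversity_def cycle_ok_def)
  have ccc: "ra_comp {At_c} {At_c} = {Ident, At_a}"
    by (auto simp: ra_comp_def atom_comp_def diversity_def cycle_ok_def)
  have cbc: "ra_comp {At_b} {At_c} = {At_a}"
    by (auto simp: ra_comp_def atom_comp_def diversity_def cycle_ok_def)
  have ccb: "ra_comp {At_c} {At_b} = {At_a}"
    by (auto simp: ra_comp_def atom_comp_def diversity_def cycle_ok_def)
  have cGG: "ra_comp {At_b, At_c} {At_b, At_c} = {Ident, At_a}"
    by (auto simp: ra_comp_def atom_comp_def diversity_def cycle_ok_def)
  have caa: "ra_comp {At_a} {At_a} = UNIV"
  proof -
    have "y \<in> ra_comp {At_a} {At_a}" for y
      by (cases y) (auto simp: ra_comp_def atom_comp_def diversity_def cycle_ok_def)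
    then show ?thesis by blast
  qed
  have BB: "B O B = Id_on U \<union> A" using hcomp[of "{At_b}" "{At_b}"] cbb hIa B_def by simp
  have CC: "C O C = Id_on U \<union> A" using hcomp[of "{At_c}" "{At_c}"] ccc hIa C_def by simp
  have BC: "B O C = A" using hcomp[of "{At_b}" "{At_c}"] cbc A_def B_def C_def by simp
  have CB: "C O B = A" using hcomp[of "{At_c}" "{At_b}"] ccb A_def B_def C_def by simp
  have AA: "A O A = U \<times> U" using hcomp[of "{At_a}" "{At_a}"] caa hUNIV A_def by simp
  have GG: "(B \<union> C) O (B \<union> C) = Id_on U \<union> A" using hcomp[of "{At_b, At_c}" "{At_b, At_c}"] cGG hIa hbc by simp
  have dGI: "(B \<union> C) \<inter> (Id_on U \<union> A) = {}"
    using hdisj[of "{At_b, At_c}" "{Ident, At_a}"] hbc hIa by simp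
  have dAB: "A \<inter> B = {}" using hdisj[of "{At_a}" "{At_b}"] A_def B_def by simp
  have dAC: "A \<inter> C = {}" using hdisj[of "{At_a}" "{At_c}"] A_def C_def by simp
  have dBC: "B \<inter> C = {}" using hdisj[of "{At_b}" "{At_c}"] B_def C_def by simp
  have dIA: "Id_on U \<inter> A = {}" using hdisj[of "{Ident}" "{At_a}"] A_def hI by simp
  have subA: "A \<subseteq> U \<times> U" and subB: "B \<subseteq> U \<times> U" and subC: "C \<subseteq> U \<times> U"
    using hsub A_def B_def C_def by auto
  have symA: "(p,q) \<in> A \<Longrightarrow> (q,p) \<in> A" for p q using hsym[of "{At_a}"] A_def by blast
  have symB: "(p,q) \<in> B \<Longrightarrow> (q,p) \<in> B" for p q using hsym[of "{At_b}"] B_def by blast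
  have symC: "(p,q) \<in> C \<Longrightarrow> (q,p) \<in> C" for p q using hsym[of "{At_c}"] C_def by blast
  have irA: "(p,p) \<notin> A" for p using subA dIA by blast
  have irB: "(p,p) \<notin> B" for p using subB dGI by blast
  have irC: "(p,p) \<notin> C" for p using subC dGI by blast
  have tri: "(p,r) \<notin> B \<union> C" if "(p,q) \<in> B \<union> C" "(q,r) \<in> B \<union> C" for p q r
  proof -
    have "(p,r) \<in> Id_on U \<union> A" using that GG by blast
    then show ?thesis using dGI by blast
  qed
  have part: "U \<times> U = Id_on U \<union> A \<union> B \<union> C"
  proof -
    have "UNIV = {Ident, At_a} \<union> {At_b, At_c}" by (auto intro: atom.exhaust)
    then have "h UNIV = h {Ident, At_a} \<union> h {At_b, At_c}" using hun by metis
    then show ?thesis using hUNIV hIa hbc by auto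
  qed
  have L: "card U \<ge> 11" if "(p,z) \<in> A" "(p,z') \<in> A" "(z,z') \<in> B" for p z z'
  proof -
    have c1: "A \<subseteq> B O B" and c2: "A \<subseteq> C O C" and c3: "A \<subseteq> B O C" and c4: "A \<subseteq> C O B"
      using BB CC BC CB by auto
    show ?thesis
      using key11[OF assms(2) subA subB subC irA irB irC dAB dAC dBC symB symC tri c1 c2 c3 c4 that]
      by simp
  qed
  show ?thesis
  proof (rule ccontr)
    assume neg: "\<not> card U \<ge> 11"
    have "(x,x) \<in> B O B" using BB xU by auto
    then obtain y where xy: "(x,y) \<in> B" by blast
    have "(x,y) \<in> A O A" using AA xy subB by auto
    then obtain w where xw: "(x,w) \<in> A" and wy: "(w,y) \<in> A" by blast
    have "(w,w) \<in> B O B" using BB xw subA by auto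
    then obtain u where wu: "(w,u) \<in> B" by blast
    have "(x,u) \<in> U \<times> U" using xw wu subA subB by auto
    then have xu: "(x,u) \<in> B \<union> C"
    proof -
      have "(x,u) \<notin> Id_on U" using wu xw symA dAB by blast
      moreover have "(x,u) \<notin> A" using L[of x w u] xw wu neg by blast
      ultimately show ?thesis using \<open>(x,u) \<in> U \<times> U\<close> part by blast
    qed
    have "(y,u) \<in> U \<times> U" using wy wu subA subB by auto
    then have yu: "(y,u) \<in> B \<union> C"
    proof -
      have "(y,u) \<notin> Id_on U" using wu wy dAB by blast
      moreover have "(y,u) \<notin> A" using L[of y w u] wy wu neg symA by blast
      ultimately show ?thesis using \<open>(y,u) \<in> U \<times> U\<close> part by blast
    qed
    have "(u,y) \<in> B \<union> C" using yu symB symC by blast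
    then show False using tri[OF xu] xy by blast
  qed
qed

end
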